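(* Let $f:\mathbb{R}\to\mathbb{C}$ be a Lebesgue measurable function which is not zero almost everywhere, has faster than exponential decay, i.e. $\lim_{x\to\infty}|f(x)|e^{cx}=0$ for every $c>0$, and is quasi-monotone, i.e. for every $b>0$ there exists $C=C(b)>0$ such that $|f(x+b)|<C|f(x)|$ for all $x>0$. Then $\mathcal G(f,\mathbb{R}^2)$ is linearly independent.
   Context: For $a,b\in\mathbb{R}$, $M_aT_bf(x)=e^{2\pi i a x}f(x-b)$, and $\mathcal G(f,\mathbb{R}^2)=\{M_aT_bf:a,b\in\mathbb{R}\}$. Measurable functions equal a.e. are identified; $\mathcal G(f,\mathbb{R}^2)$ is linearly independent if every finite linear combination $\sum c_{(a,b)}M_aT_bf$ over distinct pairs $(a,b)$ with coefficients not all zero is not zero almost everywhere. *)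

theory Defs
  imports "HOL-Analysis.Analysis"
begin

definition MT :: "real \<Rightarrow> real \<Rightarrow> (real \<Rightarrow> complex) \<Rightarrow> real \<Rightarrow> complex" where
  "MT a b f x = exp (2 * pi * \<i> * complex_of_real (a * x)) * f (x - b)"

text \<open>G(f,R^2) is linearly independent (functions identified a.e. w.r.t. Lebesgue measure):
  every finite linear combination over distinct pairs (a,b) that vanishes a.e. has all
  coefficients zero.\<close>
definition gabor_lin_indep :: "(real \<Rightarrow> complex) \<Rightarrow> bool" where
  "gabor_lin_indep f \<longleftrightarrow>
     (\<forall>S c. finite (S :: (real \<times> real) set) \<longrightarrow>
        (AE x in lebesgue. (\<Sum>p\<in>S. c p * MT (fst p) (snd p) f x) = 0) \<longrightarrow>
        (\<forall>p\<in>S. c p = (0::complex)))"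

end

theory Submission
  imports Defs
begin


definition E :: "real \<Rightarrow> real \<Rightarrow> complex" where
  "E a t = exp (2 * pi * \<i> * complex_of_real (a * t))"

lemma E_cis: "E a t = cis (2 * pi * a * t)"
  by (simp add: E_def cis_conv_exp mult.commute mult.left_commute)

lemma E_add: "E a (t + h) = E a t * E a h"
  by (simp add: E_cis cis_mult distrib_left)

lemma norm_E [simp]: "norm (E a t) = 1"
  by (simp add: E_cis)

lemma cis_lip: "norm (cis x - cis y) \<le> \<bar>x - y\<bar>"
proof -
  have "(norm (cis x - cis y))^2 = (cos x - cos y)^2 + (sin x - sin y)^2"
    by (simp add: cmod_def)
  also have "\<dots> = 2 - 2 * cos (x - y)"
    by (simp add: power2_eq_square cos_diff algebra_simps)
  also have "\<dots> = 4 * (sin ((x - y)/2))^2"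
  proof -
    have "x - y = 2*((x-y)/2)" by simp
    then have "cos (x - y) = 1 - 2 * (sin ((x-y)/2))^2" by (metis cos_double_sin)
    then show ?thesis by simp
  qed
  also have "\<dots> \<le> 4 * ((x-y)/2)^2"
    using abs_sin_x_le_abs_x[of "(x-y)/2"]
    by (metis abs_ge_zero mult_le_cancel_left_pos power2_abs power_mono zero_less_numeral)
  also have "\<dots> = (\<bar>x - y\<bar>)^2" by (simp add: power2_eq_square)
  finally show ?thesis by (rule power2_le_imp_le) simp
qed

lemma E_lip: "norm (E a t - E a s) \<le> 2 * pi * \<bar>a\<bar> * \<bar>t - s\<bar>"
proof -
  have "norm (E a t - E a s) \<le> \<bar>2 * pi * a * t - 2 * pi * a * s\<bar>"
    unfolding E_cis by (rule cis_lip)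
  also have "\<dots> = 2 * pi * \<bar>a\<bar> * \<bar>t - s\<bar>"
    by (simp add: abs_mult right_diff_distrib[symmetric] mult.assoc[symmetric])
  finally show ?thesis .
qed

lemma E_neq:
  assumes "h > 0" "\<bar>a - a0\<bar> * h < 1" "a \<noteq> a0"
  shows "E a h \<noteq> E a0 h"
proof
  assume eq: "E a h = E a0 h"
  have "E (a - a0) h = E a h / E a0 h"
    by (simp add: E_def left_diff_distrib exp_diff[symmetric] right_diff_distrib)
  hence "E (a - a0) h = 1" using eq by (metis divide_self norm_E norm_zero zero_neq_one)
  hence "exp (complex_of_real (2 * pi * (a - a0) * h) * \<i>) = 1"
    by (simp add: E_def mult_ac)
  then obtain n :: int where n: "2 * pi * (a - a0) * h = of_int (2 * n) * pi"
    by (auto simp: exp_eq_1)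
  hence "(2*pi) * ((a - a0) * h) = (2*pi) * of_int n" by (simp add: algebra_simps)
  hence "(a - a0) * h = of_int n" by simp
  moreover have "(a - a0) * h \<noteq> 0" using assms by simp
  moreover have "n \<noteq> 0" using calculation by auto
  hence "1 \<le> \<bar>n\<bar>" by linarith
  hence "1 \<le> \<bar>real_of_int n\<bar>" by (metis of_int_1_le_iff of_int_abs)
  ultimately have "\<bar>(a - a0) * h\<bar> \<ge> 1" by simp
  thus False using assms by (simp add: abs_mult)
qed

lemma window:
  assumes "finite A" "A \<noteq> {}"
  shows "\<forall>w L. (\<forall>a\<in>A. w a \<noteq> 0) \<longrightarrow> L > 0 \<longrightarrow>
    (\<exists>\<eta>>0. \<forall>u. \<exists>t. u \<le> t \<and> t \<le> u + L \<and> \<eta> \<le> norm (\<Sum>a\<in>A. w a * E a t))"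
  using assms
proof (induction A rule: finite_ne_induct)
  case (singleton a)
  show ?case
  proof (intro allI impI)
    fix w :: "real \<Rightarrow> complex" and L :: real
    assume w: "\<forall>a'\<in>{a}. w a' \<noteq> 0" and l: "L > 0"
    show "\<exists>\<eta>>0. \<forall>u. \<exists>t. u \<le> t \<and> t \<le> u + L \<and> \<eta> \<le> norm (\<Sum>a\<in>{a}. w a * E a t)"
    proof (rule exI[of _ "norm (w a)"], intro conjI allI)
      show "norm (w a) > 0" using w by simp
      fix u show "\<exists>t. u \<le> t \<and> t \<le> u + L \<and> norm (w a) \<le> norm (\<Sum>a\<in>{a}. w a * E a t)"
        using l by (intro exI[of _ u]) (simp add: norm_mult)
    qed
  qed
next
  case (insert a0 A)
  show ?case
  proof (intro allI impI)
    fix w :: "real \<Rightarrow> complex" and L :: real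
    assume w: "\<forall>a\<in>insert a0 A. w a \<noteq> 0" and l: "L > 0"
    define M where "M = (\<Sum>a\<in>A. \<bar>a - a0\<bar>)"
    define h where "h = min (L/2) (1/(2*(M+1)))"
    have M0: "M \<ge> 0" by (simp add: M_def sum_nonneg)
    have h0: "h > 0" using l M0 by (simp add: h_def)
    have hl: "h \<le> L/2" by (simp add: h_def)
    have hM: "h \<le> 1/(2*(M+1))" by (simp add: h_def)
    have hA: "\<bar>a - a0\<bar> * h < 1" if a: "a \<in> A" for a
    proof -
      have "\<bar>a - a0\<bar> \<le> M" unfolding M_def
        by (rule member_le_sum[OF a _ insert.hyps(1)]) simp
      hence "\<bar>a - a0\<bar> * h \<le> M * h" using h0 by (simp add: mult_right_mono)
      also have "\<dots> \<le> M * (1/(2*(M+1)))" using mult_left_mono[OF hM M0] by simp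
      also have "\<dots> < 1" using M0 by (simp add: field_simps)
      finally show ?thesis .
    qed
    define w' where "w' a = w a * (E a h - E a0 h)" for a
    have w': "\<forall>a\<in>A. w' a \<noteq> 0"
    proof
      fix a assume a: "a \<in> A"
      hence "a \<noteq> a0" using insert.hyps(3) by auto
      hence "E a h \<noteq> E a0 h" using E_neq[OF h0 hA[OF a]] by simp
      thus "w' a \<noteq> 0" using w a by (simp add: w'_def)
    qed
    obtain \<eta>' where e0: "\<eta>' > 0" and e1: "\<forall>u. \<exists>t. u \<le> t \<and> t \<le> u + L/2 \<and> \<eta>' \<le> norm (\<Sum>a\<in>A. w' a * E a t)"
      using insert.IH w' l by (metis half_gt_zero)
    define R where "R t = (\<Sum>a\<in>insert a0 A. w a * E a t)" for t
    have key: "(\<Sum>a\<in>A. w' a * E a t) = R (t+h) - E a0 h * R t" for t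
    proof -
      have "R (t+h) - E a0 h * R t = (\<Sum>a\<in>insert a0 A. w' a * E a t)"
        by (simp add: R_def E_add w'_def sum_distrib_left sum_subtractf[symmetric] algebra_simps)
      also have "\<dots> = (\<Sum>a\<in>A. w' a * E a t)"
        using insert.hyps by (simp add: w'_def)
      finally show ?thesis by simp
    qed
    show "\<exists>\<eta>>0. \<forall>u. \<exists>t. u \<le> t \<and> t \<le> u + L \<and> \<eta> \<le> norm (\<Sum>a\<in>insert a0 A. w a * E a t)"
    proof (rule exI[of _ "\<eta>'/2"], intro conjI allI)
      show "\<eta>'/2 > 0" using e0 by simp
      fix u
      obtain t where t: "u \<le> t" "t \<le> u + L/2" "\<eta>' \<le> norm (\<Sum>a\<in>A. w' a * E a t)"
        using e1 by blast
      have "\<eta>' \<le> norm (R (t+h)) + norm (R t)"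
        using t(3) key[of t] norm_triangle_ineq4[of "R (t+h)" "E a0 h * R t"]
        by (simp add: norm_mult)
      hence "\<eta>'/2 \<le> norm (R (t+h)) \<or> \<eta>'/2 \<le> norm (R t)" by linarith
      thus "\<exists>t. u \<le> t \<and> t \<le> u + L \<and> \<eta>'/2 \<le> norm (\<Sum>a\<in>insert a0 A. w a * E a t)"
      proof
        assume "\<eta>'/2 \<le> norm (R (t+h))"
        thus ?thesis using t h0 hl unfolding R_def by (intro exI[of _ "t+h"]) auto
      next
        assume "\<eta>'/2 \<le> norm (R t)"
        thus ?thesis using t l unfolding R_def by (intro exI[of _ "t"]) auto
      qed
    qed
  qed
qed



lemma good_steps:
  fixes Q :: "real \<Rightarrow> complex" and d \<eta> \<Lambda> :: real
  assumes d: "d > 0" and eta: "\<eta> > 0" and Lam: "\<Lambda> \<ge> 0"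
    and lip: "\<And>t s. norm (Q t - Q s) \<le> \<Lambda> * \<bar>t - s\<bar>"
    and win: "\<And>u. \<exists>t. u \<le> t \<and> t \<le> u + d/4 \<and> \<eta> \<le> norm (Q t)"
  shows "\<exists>St. finite St \<and> St \<subseteq> {d/4..d/2} \<and> (\<forall>x. \<exists>s\<in>St. \<eta>/2 \<le> norm (Q (x + s)))"
proof -
  define h where "h = min (d/4) (\<eta>/(2*\<Lambda>+1))"
  have h0: "h > 0" using d eta Lam by (simp add: h_def)
  have hL: "\<Lambda> * h \<le> \<eta>/2"
  proof -
    have "\<Lambda> * h \<le> \<Lambda> * (\<eta>/(2*\<Lambda>+1))" using Lam by (intro mult_left_mono) (auto simp: h_def)
    also have "\<dots> \<le> \<eta>/2" using Lam eta by (simp add: field_simps)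
    finally show ?thesis .
  qed
  define N where "N = nat \<lceil>d/(4*h)\<rceil>"
  define St where "St = ((\<lambda>i. d/4 + real i * h) ` {..N}) \<inter> {d/4..d/2}"
  have "\<forall>x. \<exists>s\<in>St. \<eta>/2 \<le> norm (Q (x + s))"
  proof
    fix x
    obtain t where t: "x + d/4 \<le> t" "t \<le> x + d/4 + d/4" "\<eta> \<le> norm (Q t)" using win by blast
    define z where "z = (t - x - d/4) / h"
    have z0: "0 \<le> z" using t h0 by (simp add: z_def)
    have "t - x - d/4 \<le> d/4" using t by linarith
    hence "z \<le> (d/4)/h" unfolding z_def using h0 by (intro divide_right_mono) auto
    hence zN: "z \<le> d/(4*h)" by simp
    define i where "i = nat \<lfloor>z\<rfloor>"
    have ri: "real i = of_int \<lfloor>z\<rfloor>" using z0 by (simp add: i_def)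
    have i1: "real i \<le> z" using ri by linarith
    have i2: "z < real i + 1" using ri by linarith
    have iN: "i \<le> N" unfolding i_def N_def using zN
      by (meson ceiling_mono le_nat_iff nat_mono floor_le_ceiling order_trans of_int_floor_le
               floor_le_ceiling le_of_int_ceiling floor_mono)
    define s where "s = d/4 + real i * h"
    have s1: "real i * h \<le> t - x - d/4" using i1 h0 by (simp add: z_def pos_le_divide_eq)
    have s2: "t - x - d/4 < (real i + 1) * h" using i2 h0 by (simp add: z_def pos_divide_less_eq)
    have sSt: "s \<in> St" unfolding St_def s_def using iN s1 t h0 by auto
    have "norm (Q t - Q (x + s)) \<le> \<Lambda> * \<bar>t - (x + s)\<bar>" by (rule lip)
    also have "\<dots> \<le> \<Lambda> * h" using s1 s2 Lam unfolding s_def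
      by (intro mult_left_mono) (auto simp: algebra_simps)
    finally have "norm (Q t - Q (x + s)) \<le> \<eta>/2" using hL by linarith
    hence "\<eta>/2 \<le> norm (Q (x + s))" using t(3) norm_triangle_ineq2[of "Q t" "Q (x+s)"] by linarith
    thus "\<exists>s\<in>St. \<eta>/2 \<le> norm (Q (x + s))" using sSt by blast
  qed
  moreover have "finite St" by (simp add: St_def)
  moreover have "St \<subseteq> {d/4..d/2}" by (simp add: St_def)
  ultimately show ?thesis by blast
qed

lemma not_negl: "\<not> negligible {a..a+(1::real)}"
proof
  assume "negligible {a..a+1}"
  then have "measure lebesgue {a..a+1} = 0" by (rule negligible_imp_measure0)
  then show False by simp
qed



lemma MT_E: "MT a b f x = E a x * f (x - b)"
  by (simp add: MT_def E_def)

lemma norm_MT: "norm (MT a b f x) = norm (f (x - b))"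
  by (simp add: MT_E norm_mult)

theorem theorem3p4:
  fixes f :: "real \<Rightarrow> complex"
  assumes meas: "f \<in> borel_measurable lebesgue"
    and nonzero: "\<not> (AE x in lebesgue. f x = 0)"
    and decay: "\<And>c. c > 0 \<Longrightarrow> ((\<lambda>x. norm (f x) * exp (c * x)) \<longlongrightarrow> 0) at_top"
    and quasi_mono: "\<And>b. b > 0 \<Longrightarrow> \<exists>C>0. \<forall>x>0. norm (f (x + b)) < C * norm (f x)"
  shows "gabor_lin_indep f"
  unfolding gabor_lin_indep_def
proof (intro allI impI ballI)
  fix S :: "(real \<times> real) set" and c :: "real \<times> real \<Rightarrow> complex" and p
  assume fin: "finite S"
    and ae: "AE x in lebesgue. (\<Sum>p\<in>S. c p * MT (fst p) (snd p) f x) = 0"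
    and pS: "p \<in> S"
  show "c p = 0"
  proof (rule ccontr)
    assume cp: "c p \<noteq> 0"
    define Cf where "Cf b = (SOME C. C > 0 \<and> (\<forall>x>0. norm (f (x + b)) < C * norm (f x)))" for b
    have Cf: "Cf b > 0 \<and> (\<forall>x>0. norm (f (x + b)) < Cf b * norm (f x))" if "b > 0" for b
      unfolding Cf_def using someI_ex[OF quasi_mono[OF that]] by blast
    have fnz: "f y \<noteq> 0" if "y > 0" for y
      using Cf[of 1] that by force
    define S' where "S' = {q\<in>S. c q \<noteq> 0}"
    have S'fin: "finite S'" using fin by (simp add: S'_def)
    have pS': "p \<in> S'" using pS cp by (simp add: S'_def)
    define bm where "bm = Max (snd ` S')"
    have bm_ge: "snd q \<le> bm" if "q \<in> S'" for q
      unfolding bm_def using S'fin that by simp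
    define S1 where "S1 = {q\<in>S'. snd q = bm}"
    define T where "T = {q\<in>S'. snd q < bm}"
    define A where "A = fst ` S1"
    define w where "w a = c (a, bm)" for a
    define Q where "Q t = (\<Sum>a\<in>A. w a * E a t)" for t
    have "bm \<in> snd ` S'" unfolding bm_def using S'fin pS' by (intro Max_in) auto
    then obtain q0 where q0: "q0 \<in> S'" "snd q0 = bm" by auto
    have Afin: "finite A" using S'fin by (simp add: A_def S1_def)
    have Ane: "A \<noteq> {}" using q0 by (auto simp: A_def S1_def) (metis prod.collapse)
    have wnz: "\<forall>a\<in>A. w a \<noteq> 0"
    proof
      fix a assume "a \<in> A"
      then obtain q where q: "q \<in> S1" "a = fst q" by (auto simp: A_def)
      hence "q = (a, bm)" by (auto simp: S1_def prod_eq_iff)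
      thus "w a \<noteq> 0" using q by (auto simp: S1_def S'_def w_def)
    qed
    have Tfin: "finite T" using S'fin by (simp add: T_def)
    have decomp: "(\<Sum>q\<in>S. c q * MT (fst q) (snd q) f x) = Q x * f (x - bm) + (\<Sum>q\<in>T. c q * MT (fst q) (snd q) f x)" for x
    proof -
      have "(\<Sum>q\<in>S. c q * MT (fst q) (snd q) f x) = (\<Sum>q\<in>S'. c q * MT (fst q) (snd q) f x)"
        using fin by (intro sum.mono_neutral_right) (auto simp: S'_def)
      also have "S' = S1 \<union> T" using bm_ge by (force simp: S1_def T_def)
      also have "(\<Sum>q\<in>S1 \<union> T. c q * MT (fst q) (snd q) f x) = (\<Sum>q\<in>S1. c q * MT (fst q) (snd q) f x) + (\<Sum>q\<in>T. c q * MT (fst q) (snd q) f x)"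
        using S'fin by (intro sum.union_disjoint) (auto simp: S1_def T_def)
      also have "(\<Sum>q\<in>S1. c q * MT (fst q) (snd q) f x) = Q x * f (x - bm)"
      proof -
        have inj: "inj_on fst S1" by (auto simp: inj_on_def S1_def prod_eq_iff)
        have "Q x * f (x - bm) = (\<Sum>a\<in>A. w a * MT a bm f x)"
          by (simp add: Q_def sum_distrib_right MT_E mult.assoc)
        also have "\<dots> = (\<Sum>q\<in>S1. w (fst q) * MT (fst q) bm f x)"
          unfolding A_def by (simp add: sum.reindex[OF inj])
        also have "\<dots> = (\<Sum>q\<in>S1. c q * MT (fst q) (snd q) f x)"
        proof (rule sum.cong)
          fix q assume "q \<in> S1"
          hence "q = (fst q, bm)" "snd q = bm" by (auto simp: S1_def prod_eq_iff)
          thus "w (fst q) * MT (fst q) bm f x = c q * MT (fst q) (snd q) f x"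
            by (metis w_def)
        qed simp
        finally show ?thesis by simp
      qed
      finally show ?thesis .
    qed
    obtain N where N: "N \<in> null_sets lebesgue" "{x. \<not> (\<Sum>p\<in>S. c p * MT (fst p) (snd p) f x) = 0} \<subseteq> N"
      using ae by (auto simp: eventually_ae_filter)
    have ineq: "norm (Q x) * norm (f (x - bm)) \<le> (\<Sum>q\<in>T. norm (c q) * norm (f (x - snd q)))" if "x \<notin> N" for x
    proof -
      have "Q x * f (x - bm) = - (\<Sum>q\<in>T. c q * MT (fst q) (snd q) f x)"
      proof -
        have "(\<Sum>p\<in>S. c p * MT (fst p) (snd p) f x) = 0" using N(2) that by blast
        hence "Q x * f (x - bm) + (\<Sum>q\<in>T. c q * MT (fst q) (snd q) f x) = 0" using decomp[of x] by simp
        thus ?thesis by (simp add: eq_neg_iff_add_eq_0)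
      qed
      hence "norm (Q x) * norm (f (x - bm)) = norm (\<Sum>q\<in>T. c q * MT (fst q) (snd q) f x)"
        by (metis norm_minus_cancel norm_mult)
      also have "\<dots> \<le> (\<Sum>q\<in>T. norm (c q * MT (fst q) (snd q) f x))" by (rule norm_sum)
      also have "\<dots> = (\<Sum>q\<in>T. norm (c q) * norm (f (x - snd q)))" by (simp add: norm_mult norm_MT)
      finally show ?thesis .
    qed
    define d where "d = (if T = {} then 1 else Min ((\<lambda>q. bm - snd q) ` T))"
    have dT: "d \<le> bm - snd q" if "q \<in> T" for q
      using that Tfin by (auto simp: d_def)
    have d0: "d > 0"
    proof (cases "T = {}")
      case False
      hence "d \<in> (\<lambda>q. bm - snd q) ` T" unfolding d_def using Tfin by (simp add: Max_in)
      thus ?thesis by (auto simp: T_def)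
    qed (simp add: d_def)
    obtain \<eta> where eta: "\<eta> > 0" and win: "\<And>u. \<exists>t. u \<le> t \<and> t \<le> u + d/4 \<and> \<eta> \<le> norm (Q t)"
      using window[OF Afin Ane] wnz d0 unfolding Q_def by (metis zero_less_divide_iff zero_less_numeral)
    define \<Lambda> where "\<Lambda> = (\<Sum>a\<in>A. norm (w a) * (2 * pi * \<bar>a\<bar>))"
    have Lam: "\<Lambda> \<ge> 0" unfolding \<Lambda>_def by (intro sum_nonneg) auto
    have lip: "norm (Q t - Q s) \<le> \<Lambda> * \<bar>t - s\<bar>" for t s
    proof -
      have "norm (Q t - Q s) = norm (\<Sum>a\<in>A. w a * (E a t - E a s))"
        by (simp add: Q_def sum_subtractf[symmetric] algebra_simps)
      also have "\<dots> \<le> (\<Sum>a\<in>A. norm (w a * (E a t - E a s)))" by (rule norm_sum)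
      also have "\<dots> \<le> (\<Sum>a\<in>A. norm (w a) * (2 * pi * \<bar>a\<bar>) * \<bar>t - s\<bar>)"
      proof (rule sum_mono)
        fix a
        have "norm (w a) * norm (E a t - E a s) \<le> norm (w a) * (2 * pi * \<bar>a\<bar> * \<bar>t - s\<bar>)"
          by (rule mult_left_mono[OF E_lip]) simp
        thus "norm (w a * (E a t - E a s)) \<le> norm (w a) * (2 * pi * \<bar>a\<bar>) * \<bar>t - s\<bar>"
          by (simp add: norm_mult mult_ac)
      qed
      also have "\<dots> = \<Lambda> * \<bar>t - s\<bar>" by (simp add: \<Lambda>_def sum_distrib_right)
      finally show ?thesis .
    qed
    obtain St where St: "finite St" "St \<subseteq> {d/4..d/2}" and good: "\<And>x. \<exists>s\<in>St. \<eta>/2 \<le> norm (Q (x + s))"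
      using good_steps[OF d0 eta Lam lip win] by blast
    define K where "K = (\<Sum>q\<in>T. \<Sum>s\<in>St. norm (c q) * Cf (bm - snd q - s)) + 1"
    have Cpos: "bm - snd q - s > 0" if "q \<in> T" "s \<in> St" for q s
      using dT[OF that(1)] St(2) that(2) d0 by force
    have nnq: "0 \<le> norm (c q) * Cf (bm - snd q - s)" if "q \<in> T" "s \<in> St" for q s
    proof -
      have "Cf (bm - snd q - s) > 0" using Cf Cpos[OF that] by blast
      thus ?thesis by simp
    qed
    have K0: "K > 0"
    proof -
      have "(\<Sum>q\<in>T. \<Sum>s\<in>St. norm (c q) * Cf (bm - snd q - s)) \<ge> 0"
        using nnq by (intro sum_nonneg) auto
      thus ?thesis by (simp add: K_def)
    qed
    have step: "(\<eta>/2) * norm (f (x - bm)) \<le> K * norm (f (x + s - bm))"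
      if x: "x \<notin> N" "x - bm > 0" "\<eta>/2 \<le> norm (Q x)" and s: "s \<in> St" for x s
    proof -
      have s0: "s > 0" using s St(2) d0 by force
      have "(\<eta>/2) * norm (f (x - bm)) \<le> norm (Q x) * norm (f (x - bm))"
        using mult_right_mono[OF x(3) norm_ge_zero] .
      also have "\<dots> \<le> (\<Sum>q\<in>T. norm (c q) * norm (f (x - snd q)))" by (rule ineq[OF x(1)])
      also have "\<dots> \<le> (\<Sum>q\<in>T. (\<Sum>s'\<in>St. norm (c q) * Cf (bm - snd q - s')) * norm (f (x + s - bm)))"
      proof (rule sum_mono)
        fix q assume q: "q \<in> T"
        have b: "bm - snd q - s > 0" by (rule Cpos[OF q s])
        have "x - snd q = (x + s - bm) + (bm - snd q - s)" by simp
        hence "norm (f (x - snd q)) \<le> Cf (bm - snd q - s) * norm (f (x + s - bm))"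
        proof -
          have xs: "x + s - bm > 0" using x(2) s0 by linarith
          have "norm (f ((x + s - bm) + (bm - snd q - s))) < Cf (bm - snd q - s) * norm (f (x + s - bm))"
            using Cf[OF b] xs by blast
          thus ?thesis by simp
        qed
        hence "norm (c q) * norm (f (x - snd q)) \<le> norm (c q) * Cf (bm - snd q - s) * norm (f (x + s - bm))"
          by (simp add: mult.assoc mult_left_mono)
        also have "\<dots> \<le> (\<Sum>s'\<in>St. norm (c q) * Cf (bm - snd q - s')) * norm (f (x + s - bm))"
          by (intro mult_right_mono member_le_sum[OF s] St(1)) (auto intro: nnq[OF q])
        finally show "norm (c q) * norm (f (x - snd q)) \<le> (\<Sum>s'\<in>St. norm (c q) * Cf (bm - snd q - s')) * norm (f (x + s - bm))" .
      qed
      also have "\<dots> \<le> K * norm (f (x + s - bm))"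
        by (simp add: K_def sum_distrib_right[symmetric] distrib_right)
      finally show ?thesis .
    qed
    define Off where "Off = sum_list ` lists St"
    have Offc: "countable Off" unfolding Off_def using St(1) by (intro countable_image countable_lists countable_finite)
    have Nneg: "negligible N" using N(1) by (simp add: negligible_iff_null_sets)
    define B where "B = (\<Union>z\<in>Off. (+) (- z) ` N)"
    have Bneg: "negligible B" unfolding B_def
    proof (rule negligible_countable_Union)
      show "countable ((\<lambda>z. (+) (- z) ` N) ` Off)" using Offc by simp
      fix M assume "M \<in> (\<lambda>z. (+) (- z) ` N) ` Off"
      then obtain z where "M = (+) (- z) ` N" by auto
      thus "negligible M" using negligible_translation[OF Nneg, of "- z"] by simp
    qed
    have "\<not> {bm+1..bm+1+1} \<subseteq> B" using not_negl Bneg negligible_subset by blast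
    then obtain x0 where x0': "x0 \<in> {bm+1..bm+1+1}" "x0 \<notin> B" by blast
    hence x0: "bm + 1 \<le> x0" "x0 \<notin> B" by auto
    define nxt where "nxt x = x + (SOME s. s \<in> St \<and> \<eta>/2 \<le> norm (Q (x + s)))" for x
    have nxt: "nxt x - x \<in> St \<and> \<eta>/2 \<le> norm (Q (nxt x))" for x
    proof -
      have "\<exists>s. s \<in> St \<and> \<eta>/2 \<le> norm (Q (x + s))" using good by blast
      from someI_ex[OF this] show ?thesis by (simp add: nxt_def)
    qed
    define sq where "sq k = (nxt ^^ Suc k) x0" for k
    have sqS: "sq (Suc k) = nxt (sq k)" for k by (simp add: sq_def)
    have sq0: "sq 0 = nxt x0" by (simp add: sq_def)
    have sqOff: "sq k - x0 \<in> Off" for k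
    proof (induction k)
      case 0 then show ?case using nxt[of x0] unfolding sq0 Off_def
        by (intro image_eqI[of _ _ "[nxt x0 - x0]"]) auto
    next
      case (Suc k)
      then obtain xs where xs: "set xs \<subseteq> St" "sq k - x0 = sum_list xs" by (auto simp: Off_def)
      have "sq (Suc k) - x0 = sum_list (xs @ [nxt (sq k) - sq k])" using xs by (simp add: sqS)
      thus ?case using xs nxt[of "sq k"] unfolding Off_def
        by (intro image_eqI[of _ _ "xs @ [nxt (sq k) - sq k]"]) auto
    qed
    have sqN: "sq k \<notin> N" for k
    proof
      assume "sq k \<in> N"
      hence "x0 \<in> (+) (- (sq k - x0)) ` N" by (intro image_eqI[of _ _ "sq k"]) auto
      thus False using x0(2) sqOff[of k] unfolding B_def by blast
    qed
    have sqQ: "\<eta>/2 \<le> norm (Q (sq k))" for k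
    proof (cases k)
      case 0 thus ?thesis using nxt[of x0] by (simp add: sq0)
    next
      case (Suc j) thus ?thesis using nxt[of "sq j"] by (simp add: sqS)
    qed
    have sqstep: "d/4 \<le> sq (Suc k) - sq k" for k using nxt[of "sq k"] St(2) by (auto simp: sqS)
    have sqge: "sq 0 + real k * (d/4) \<le> sq k" for k
    proof (induction k)
      case (Suc k)
      have "real (Suc k) * (d/4) = real k * (d/4) + d/4" by (simp add: distrib_right)
      thus ?case using Suc sqstep[of k] by linarith
    qed simp
    have sq0ge: "x0 \<le> sq 0"
    proof -
      have "nxt x0 - x0 \<in> {d/4..d/2}" using nxt[of x0] St(2) by blast
      thus ?thesis using d0 by (simp add: sq0)
    qed
    define y where "y k = sq k - bm" for k
    have ypos: "y k > 0" for k
    proof -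
      have "real k * (d/4) \<ge> 0" using d0 by simp
      thus ?thesis using sqge[of k] sq0ge x0(1) unfolding y_def by linarith
    qed
    have ystep: "(\<eta>/2) * norm (f (y k)) \<le> K * norm (f (y (Suc k)))" for k
    proof -
      have "nxt (sq k) - sq k \<in> St" using nxt by blast
      from step[OF sqN[of k] _ sqQ[of k] this] ypos[of k]
      show ?thesis by (simp add: y_def sqS)
    qed
    define r where "r = \<eta> / (2 * K)"
    have r0: "r > 0" using eta K0 by (simp add: r_def)
    have yr: "r * norm (f (y k)) \<le> norm (f (y (Suc k)))" for k
      using ystep[of k] K0 by (simp add: r_def field_simps)
    define cc where "cc = 4 * \<bar>ln r\<bar> / d + 1"
    have cc0: "cc > 0"
    proof -
      have "4 * \<bar>ln r\<bar> / d \<ge> 0" using d0 by simp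
      thus ?thesis unfolding cc_def by linarith
    qed
    have rexp: "1 \<le> r * exp (cc * (d/4))"
    proof -
      have "cc * (d/4) = \<bar>ln r\<bar> + d/4" using d0 by (simp add: cc_def field_simps)
      hence "ln r + cc * (d/4) \<ge> 0" using d0 by linarith
      hence "1 \<le> exp (ln r + cc * (d/4))" by simp
      also have "\<dots> = r * exp (cc * (d/4))" using r0 by (simp add: exp_add)
      finally show ?thesis .
    qed
    define \<phi> where "\<phi> k = norm (f (y k)) * exp (cc * y k)" for k
    have phi_mono: "\<phi> 0 \<le> \<phi> k" for k
    proof (induction k)
      case (Suc k)
      have ys: "y k + d/4 \<le> y (Suc k)" using sqstep[of k] by (simp add: y_def)
      have "\<phi> k \<le> r * exp (cc * (d/4)) * \<phi> k"
      proof -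
        have "\<phi> k \<ge> 0" by (simp add: \<phi>_def)
        from mult_right_mono[OF rexp this] show ?thesis by simp
      qed
      also have "\<dots> = (r * norm (f (y k))) * exp (cc * (y k + d/4))"
        by (simp add: \<phi>_def exp_add distrib_left mult_ac)
      also have "\<dots> \<le> norm (f (y (Suc k))) * exp (cc * y (Suc k))"
        using yr[of k] ys cc0 by (intro mult_mono) auto
      finally show ?case using Suc by (simp add: \<phi>_def)
    qed simp
    have phi0: "\<phi> 0 > 0" using fnz[OF ypos[of 0]] by (simp add: \<phi>_def)
    have "eventually (\<lambda>x. norm (f x) * exp (cc * x) < \<phi> 0) at_top"
      using order_tendstoD(2)[OF decay[OF cc0] phi0] .
    then obtain X where X: "\<And>x. x \<ge> X \<Longrightarrow> norm (f x) * exp (cc * x) < \<phi> 0"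
      by (auto simp: eventually_at_top_linorder)
    obtain k :: nat where k: "X - y 0 < real k * (d/4)"
    proof -
      have "\<forall>y. \<exists>n::nat. y < real n * (d/4)" using reals_Archimedean3[of "d/4"] d0 by simp
      thus ?thesis using that by blast
    qed
    have "y 0 + real k * (d/4) \<le> y k" using sqge[of k] by (simp add: y_def)
    hence "X \<le> y k" using k by linarith
    hence "\<phi> k < \<phi> 0" using X by (simp add: \<phi>_def)
    thus False using phi_mono[of k] by simp
  qed
qed

end
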